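(* Let $r \ge 3$. There exist constants $\alpha>0$, $c>0$ and $t_0$, depending only on $r$, such that for every integer $t \ge t_0$ and every integer $m$ with $\binom{t-1}{r} \le m \le \binom{t}{r}$, \[ \Lambda(m,r) - \Lambda(\lfloor m - \alpha t^{r-1}\rfloor, r) \ge c\, t^{-2}. \]
   Context: An $r$-graph is a finite subset $G$ of $\mathbb{N}^{(r)}$ (the $r$-subsets of $\mathbb{N}$). A weighting of $\mathbb{N}$ is $w:\mathbb{N}\to[0,\infty)$ with $\sum_x w(x)=1$; $w(G)=\sum_{e\in G}\prod_{x\in e}w(x)$; the Lagrangian is $\lambda(G)=\max_w w(G)$. $\Lambda(m,r)=\max\{\lambda(G): G\subseteq\mathbb{N}^{(r)},\ |G|=m\}$. *)

theory Defs
  imports Complex_Main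
begin

definition rgraph :: "nat \<Rightarrow> nat set set \<Rightarrow> bool" where
  "rgraph r G \<longleftrightarrow> finite G \<and> (\<forall>e\<in>G. finite e \<and> card e = r)"

definition weighting :: "(nat \<Rightarrow> real) \<Rightarrow> bool" where
  "weighting w \<longleftrightarrow> (\<forall>x. 0 \<le> w x) \<and> w sums 1"

definition wgraph :: "(nat \<Rightarrow> real) \<Rightarrow> nat set set \<Rightarrow> real" where
  "wgraph w G = (\<Sum>e\<in>G. \<Prod>x\<in>e. w x)"

text \<open>Lagrangian (the maximum is attained, so it equals the supremum).\<close>
definition lagrangian :: "nat set set \<Rightarrow> real" where
  "lagrangian G = (SUP w\<in>{w. weighting w}. wgraph w G)"

definition Lam :: "nat \<Rightarrow> nat \<Rightarrow> real" where
  "Lam m r = (SUP G\<in>{G. rgraph r G \<and> card G = m}. lagrangian G)"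

end

theory Submission
  imports Defs "HOL-Analysis.Convex"
begin

definition Ksets :: "nat set \<Rightarrow> nat \<Rightarrow> nat set set" where
  "Ksets V k = {A. A \<subseteq> V \<and> card A = k}"

definition esym :: "nat \<Rightarrow> nat set \<Rightarrow> (nat \<Rightarrow> real) \<Rightarrow> real" where
  "esym k V w = wgraph w (Ksets V k)"

definition dpart :: "nat set set \<Rightarrow> (nat \<Rightarrow> real) \<Rightarrow> nat \<Rightarrow> real" where
  "dpart G w u = (\<Sum>e\<in>{e\<in>G. u\<in>e}. \<Prod>x\<in>e-{u}. w x)"

lemma finite_Ksets: "finite V \<Longrightarrow> finite (Ksets V k)"
  unfolding Ksets_def by (rule finite_subset[of _ "Pow V"]) auto

lemma Ksets_finite_elem: "finite V \<Longrightarrow> e \<in> Ksets V k \<Longrightarrow> finite e"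
  unfolding Ksets_def using finite_subset by auto

lemma euler:
  assumes V: "finite V" and G: "G \<subseteq> Ksets V k"
  shows "(\<Sum>u\<in>V. w u * dpart G w u) = real k * wgraph w G"
proof -
  have fG: "finite G" using finite_subset[OF G finite_Ksets[OF V]] .
  have fe: "\<And>e. e \<in> G \<Longrightarrow> finite e" using G Ksets_finite_elem[OF V] by blast
  have sub: "\<And>e. e \<in> G \<Longrightarrow> e \<subseteq> V \<and> card e = k" using G unfolding Ksets_def by blast
  have "(\<Sum>u\<in>V. w u * dpart G w u) = (\<Sum>u\<in>V. \<Sum>e\<in>G. if u \<in> e then (\<Prod>x\<in>e. w x) else 0)"
  proof (rule sum.cong[OF refl])
    fix u assume "u \<in> V"
    have "w u * dpart G w u = (\<Sum>e\<in>{e\<in>G. u\<in>e}. w u * (\<Prod>x\<in>e-{u}. w x))"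
      unfolding dpart_def by (simp add: sum_distrib_left)
    also have "\<dots> = (\<Sum>e\<in>{e\<in>G. u\<in>e}. (\<Prod>x\<in>e. w x))"
      by (rule sum.cong[OF refl]) (use fe in \<open>auto simp: prod.remove\<close>)
    also have "\<dots> = (\<Sum>e\<in>G. if u \<in> e then (\<Prod>x\<in>e. w x) else 0)"
      using fG by (simp add: sum.inter_filter)
    finally show "w u * dpart G w u = \<dots>" .
  qed
  also have "\<dots> = (\<Sum>e\<in>G. \<Sum>u\<in>V. if u \<in> e then (\<Prod>x\<in>e. w x) else 0)"
    by (rule sum.swap)
  also have "\<dots> = (\<Sum>e\<in>G. real k * (\<Prod>x\<in>e. w x))"
  proof (rule sum.cong[OF refl])
    fix e assume e: "e \<in> G"
    have "(\<Sum>u\<in>V. if u \<in> e then (\<Prod>x\<in>e. w x) else 0) = (\<Sum>u\<in>e. (\<Prod>x\<in>e. w x))"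
      using sub[OF e] V by (simp add: sum.If_cases Int_absorb1 Int_commute)
    also have "\<dots> = real k * (\<Prod>x\<in>e. w x)" using sub[OF e] by simp
    finally show "(\<Sum>u\<in>V. if u \<in> e then (\<Prod>x\<in>e. w x) else 0) = real k * (\<Prod>x\<in>e. w x)" .
  qed
  also have "\<dots> = real k * wgraph w G" by (simp add: wgraph_def sum_distrib_left)
  finally show ?thesis .
qed

lemma dpart_K:
  assumes V: "finite V" and u: "u \<in> V" and k: "k \<ge> 1"
  shows "dpart (Ksets V k) w u = esym (k-1) (V-{u}) w"
  unfolding dpart_def esym_def wgraph_def
proof (rule sum.reindex_bij_witness[where i="insert u" and j="\<lambda>e. e - {u}"])
  fix a assume "a \<in> Ksets (V - {u}) (k - 1)"
  then have a: "a \<subseteq> V - {u}" "card a = k - 1" unfolding Ksets_def by auto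
  have fa: "finite a" using a(1) V finite_subset by blast
  show "insert u a - {u} = a" using a by auto
  show "insert u a \<in> {e \<in> Ksets V k. u \<in> e}"
    using a fa u k unfolding Ksets_def by (auto simp: card_insert_if)
next
  fix a assume "a \<in> {e \<in> Ksets V k. u \<in> e}"
  then have a: "a \<subseteq> V" "card a = k" "u \<in> a" unfolding Ksets_def by auto
  have fa: "finite a" using a(1) V finite_subset by blast
  show "insert u (a - {u}) = a" using a by auto
  show "a - {u} \<in> Ksets (V - {u}) (k - 1)" using a fa unfolding Ksets_def by auto
qed simp

lemma esym_split:
  assumes V: "finite V" and u: "u \<in> V" and k: "k \<ge> 1"
  shows "esym k V w = esym k (V-{u}) w + w u * esym (k-1) (V-{u}) w"
proof -
  have fK: "finite (Ksets V k)" using finite_Ksets[OF V] .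
  have "esym k V w = (\<Sum>e\<in>{e\<in>Ksets V k. u \<notin> e}. \<Prod>x\<in>e. w x) + (\<Sum>e\<in>{e\<in>Ksets V k. u \<in> e}. \<Prod>x\<in>e. w x)"
    unfolding esym_def wgraph_def using fK
    by (subst sum.union_disjoint[symmetric]) (auto intro: sum.cong)
  moreover have "{e\<in>Ksets V k. u \<notin> e} = Ksets (V-{u}) k" unfolding Ksets_def by auto
  moreover have "(\<Sum>e\<in>{e\<in>Ksets V k. u \<in> e}. \<Prod>x\<in>e. w x) = w u * dpart (Ksets V k) w u"
    unfolding dpart_def sum_distrib_left
    by (rule sum.cong[OF refl]) (use Ksets_finite_elem[OF V] in \<open>auto simp: prod.remove\<close>)
  ultimately show ?thesis using dpart_K[OF V u k] by (simp add: esym_def wgraph_def)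
qed

lemma esym_nonneg: "(\<And>x. 0 \<le> w x) \<Longrightarrow> 0 \<le> esym k V w"
  unfolding esym_def wgraph_def by (intro sum_nonneg prod_nonneg) auto

lemma esym_mono:
  assumes "V \<subseteq> V'" "finite V'" "\<And>x. 0 \<le> w x"
  shows "esym k V w \<le> esym k V' w"
  unfolding esym_def wgraph_def
  by (rule sum_mono2[OF finite_Ksets[OF assms(2)]]) (use assms in \<open>auto simp: Ksets_def intro: prod_nonneg\<close>)

lemma esym0: "finite V \<Longrightarrow> esym 0 V w = 1"
proof -
  assume "finite V"
  have "Ksets V 0 = {{}}" unfolding Ksets_def using \<open>finite V\<close> finite_subset by fastforce
  then show ?thesis by (simp add: esym_def wgraph_def)
qed

lemma euler_K:
  assumes V: "finite V" and k: "k \<ge> 1"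
  shows "real k * esym k V w = (\<Sum>u\<in>V. w u * esym (k-1) (V-{u}) w)"
  using euler[OF V, of "Ksets V k" k w] dpart_K[OF V _ k] by (simp add: esym_def)

lemma esym_crude:
  assumes V: "finite V" and w: "\<And>x. 0 \<le> w x"
  shows "fact k * esym k V w \<le> (\<Sum>u\<in>V. w u) ^ k"
proof (induction k)
  case 0 then show ?case using esym0[OF V] by simp
next
  case (Suc k)
  have "real (Suc k) * esym (Suc k) V w = (\<Sum>u\<in>V. w u * esym k (V-{u}) w)"
    using euler_K[OF V, of "Suc k" w] by simp
  also have "\<dots> \<le> (\<Sum>u\<in>V. w u * esym k V w)"
    by (rule sum_mono, rule mult_left_mono[OF esym_mono]) (use V w in auto)
  also have "\<dots> = (\<Sum>u\<in>V. w u) * esym k V w" by (simp add: sum_distrib_right)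
  finally have "real (Suc k) * esym (Suc k) V w \<le> (\<Sum>u\<in>V. w u) * esym k V w" .
  then have "fact k * (real (Suc k) * esym (Suc k) V w) \<le> fact k * ((\<Sum>u\<in>V. w u) * esym k V w)"
    by (rule mult_left_mono) simp
  then have "fact (Suc k) * esym (Suc k) V w \<le> (\<Sum>u\<in>V. w u) * (fact k * esym k V w)"
    by (simp add: algebra_simps)
  also have "\<dots> \<le> (\<Sum>u\<in>V. w u) * (\<Sum>u\<in>V. w u) ^ k"
    by (rule mult_left_mono[OF Suc.IH]) (simp add: sum_nonneg w)
  finally show ?case by simp
qed

lemma esym_rec2:
  assumes V: "finite V"
  shows "real (k+2) * esym (k+2) V w = (\<Sum>u\<in>V. w u) * esym (k+1) V w - (\<Sum>u\<in>V. (w u)^2 * esym k (V-{u}) w)"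
proof -
  have "real (k+2) * esym (k+2) V w = (\<Sum>u\<in>V. w u * esym (k+1) (V-{u}) w)"
    using euler_K[OF V, of "k+2" w] by simp
  also have "\<dots> = (\<Sum>u\<in>V. w u * esym (k+1) V w - (w u)^2 * esym k (V-{u}) w)"
  proof (rule sum.cong[OF refl])
    fix u assume u: "u \<in> V"
    show "w u * esym (k+1) (V-{u}) w = w u * esym (k+1) V w - (w u)^2 * esym k (V-{u}) w"
      using esym_split[OF V u, of "k+1" w] by (simp add: algebra_simps power2_eq_square)
  qed
  also have "\<dots> = (\<Sum>u\<in>V. w u) * esym (k+1) V w - (\<Sum>u\<in>V. (w u)^2 * esym k (V-{u}) w)"
    by (simp add: sum_subtractf sum_distrib_right)
  finally show ?thesis .
qed

lemma esym1:
  assumes V: "finite V"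
  shows "esym 1 V w = (\<Sum>u\<in>V. w u)"
  using euler_K[OF V, of 1 w] esym0 V by simp

lemma esym_lower:
  assumes V: "finite V" and w: "\<And>x. 0 \<le> w x" and s: "(\<Sum>u\<in>V. w u) = 1"
  shows "fact k * esym k V w \<ge> 1 - real k * (real k - 1) / 2 * (\<Sum>u\<in>V. (w u)^2)"
proof -
  define q where "q = (\<Sum>u\<in>V. (w u)^2)"
  have q0: "q \<ge> 0" unfolding q_def by (simp add: sum_nonneg)
  have "fact k * esym k V w \<ge> 1 - real k * (real k - 1) / 2 * q \<and>
        fact (k+1) * esym (k+1) V w \<ge> 1 - real (k+1) * (real (k+1) - 1) / 2 * q"
  proof (induction k)
    case 0 then show ?case using esym0[OF V] esym1[OF V] s by simp
  next
    case (Suc k)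
    have cr: "fact k * esym k V w \<le> 1" using esym_crude[of V w k, OF V w] s by simp
    have "real (k+2) * esym (k+2) V w \<ge> esym (k+1) V w - q * esym k V w"
    proof -
      have "(\<Sum>u\<in>V. (w u)^2 * esym k (V-{u}) w) \<le> (\<Sum>u\<in>V. (w u)^2 * esym k V w)"
        by (rule sum_mono, rule mult_left_mono[OF esym_mono]) (use V w in auto)
      also have "\<dots> = q * esym k V w" unfolding q_def by (simp add: sum_distrib_right)
      finally show ?thesis using esym_rec2[OF V, of k w] s by simp
    qed
    then have "fact (k+1) * (real (k+2) * esym (k+2) V w) \<ge> fact (k+1) * (esym (k+1) V w - q * esym k V w)"
      by (rule mult_left_mono) simp
    then have "fact (k+2) * esym (k+2) V w \<ge> fact (k+1) * esym (k+1) V w - real (k+1) * q * (fact k * esym k V w)"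
      by (simp add: algebra_simps)
    moreover have "real (k+1) * q * (fact k * esym k V w) \<le> real (k+1) * q"
      using cr q0 by (simp add: mult_left_le)
    ultimately have "fact (k+2) * esym (k+2) V w \<ge> 1 - real (k+1) * (real (k+1) - 1) / 2 * q - real (k+1) * q"
      using Suc.IH by linarith
    moreover have "1 - real (k+1) * (real (k+1) - 1) / 2 * q - real (k+1) * q = 1 - real (k+2) * (real (k+2) - 1) / 2 * q"
      by (simp add: algebra_simps)
    ultimately show ?case using Suc.IH by (simp add: add.commute)
  qed
  then show ?thesis unfolding q_def by blast
qed

lemma esym_upper:
  assumes V: "finite V" and w: "\<And>x. 0 \<le> w x" and s: "(\<Sum>u\<in>V. w u) = 1"
    and eta: "\<And>x. x \<in> V \<Longrightarrow> w x \<le> \<eta>"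
  shows "fact k * esym k V w \<le> 1 - real k * (real k - 1) / 2 * (\<Sum>u\<in>V. (w u)^2) + (real k)^4 * \<eta> * (\<Sum>u\<in>V. (w u)^2)"
proof -
  define q where "q = (\<Sum>u\<in>V. (w u)^2)"
  have q0: "q \<ge> 0" unfolding q_def by (simp add: sum_nonneg)
  have qeta: "q \<le> \<eta>"
  proof -
    have "q \<le> (\<Sum>u\<in>V. \<eta> * w u)" unfolding q_def power2_eq_square
      by (rule sum_mono, rule mult_right_mono) (use eta w in auto)
    also have "\<dots> = \<eta>" using s by (simp add: sum_distrib_left[symmetric])
    finally show ?thesis .
  qed
  have eta0: "\<eta> \<ge> 0" using q0 qeta by linarith
  have q2: "q * q \<le> \<eta> * q" using qeta q0 by (simp add: mult_right_mono)
  define U where "U k \<longleftrightarrow> fact k * esym k V w \<le> 1 - real k * (real k - 1) / 2 * q + (real k)^4 * \<eta> * q" for k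
  have "U k \<and> U (k+1) \<and> U (k+2)"
  proof (induction k)
    case 0
    have "real (0+2) * esym (0+2) V w = 1 - q"
      using esym_rec2[OF V, of 0 w] s esym0[OF finite_Diff[OF V]] esym1[OF V, of w] unfolding q_def by simp
    then have "fact 2 * esym 2 V w = 1 - q" by (simp add: numeral_2_eq_2)
    moreover have "0 \<le> 16 * \<eta> * q" using eta0 q0 by simp
    ultimately show ?case using esym0[OF V] esym1[OF V] s eta0 q0 unfolding U_def
      by (simp add: numeral_2_eq_2[symmetric])
  next
    case (Suc k)
    have cr: "fact k * esym k V w \<le> 1" using esym_crude[of V w k, OF V w] s by simp
    have lo: "fact (k+1) * esym (k+1) V w \<ge> 1 - real (k+1) * (real (k+1) - 1) / 2 * q"
      using esym_lower[OF V w s, of "k+1"] unfolding q_def by simp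
    have ek0: "esym k V w \<ge> 0" using esym_nonneg w by blast
    have "real (k+3) * esym (k+3) V w \<le> esym (k+2) V w - q * esym (k+1) V w + \<eta> * q * esym k V w"
    proof -
      have "(\<Sum>u\<in>V. (w u)^2 * esym (k+1) (V-{u}) w) \<ge> (\<Sum>u\<in>V. (w u)^2 * (esym (k+1) V w - \<eta> * esym k V w))"
      proof (rule sum_mono)
        fix u assume u: "u \<in> V"
        have "esym (k+1) (V-{u}) w = esym (k+1) V w - w u * esym k (V-{u}) w"
          using esym_split[OF V u, of "k+1" w] by simp
        moreover have "w u * esym k (V-{u}) w \<le> \<eta> * esym k V w"
          by (rule mult_mono) (use eta[OF u] esym_mono[of "V-{u}" V w k] V w eta0 esym_nonneg[of w] in auto)
        ultimately have "esym (k+1) (V-{u}) w \<ge> esym (k+1) V w - \<eta> * esym k V w" by linarith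
        then show "(w u)^2 * (esym (k+1) V w - \<eta> * esym k V w) \<le> (w u)^2 * esym (k+1) (V-{u}) w"
          by (rule mult_left_mono) simp
      qed
      also have "(\<Sum>u\<in>V. (w u)^2 * (esym (k+1) V w - \<eta> * esym k V w)) = q * esym (k+1) V w - \<eta> * q * esym k V w"
        unfolding q_def by (simp add: sum_subtractf sum_distrib_left sum_distrib_right algebra_simps)
      moreover have "k+3 = Suc (Suc (Suc k))" by simp
      ultimately show ?thesis using esym_rec2[OF V, of "k+1" w] s by (simp only:) (simp add: add.commute)
    qed
    then have "fact (k+2) * (real (k+3) * esym (k+3) V w) \<le> fact (k+2) * (esym (k+2) V w - q * esym (k+1) V w + \<eta> * q * esym k V w)"
      by (rule mult_left_mono) simp
    moreover have "fact (k+2) = real (k+2) * (fact (k+1)::real)" "fact (k+1) = real (k+1) * (fact k::real)"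
      "fact (k+3) = real (k+3) * (fact (k+2)::real)"
      using fact_Suc[of "k+1", where 'a=real] fact_Suc[of "k", where 'a=real] fact_Suc[of "k+2", where 'a=real]
      by (simp_all add: eval_nat_numeral)
    ultimately have main: "fact (k+3) * esym (k+3) V w \<le> fact (k+2) * esym (k+2) V w
       - real (k+2) * q * (fact (k+1) * esym (k+1) V w) + real (k+2) * real (k+1) * \<eta> * q * (fact k * esym k V w)"
      by (simp add: algebra_simps)
    have U2: "fact (k+2) * esym (k+2) V w \<le> 1 - real (k+2) * (real (k+2) - 1) / 2 * q + (real (k+2))^4 * \<eta> * q"
      using Suc.IH unfolding U_def by (simp add: add.commute)
    have poly: "(real (k+2))^4 + real (k+2) * (real (k+1) * (real (k+1) - 1) / 2) + real (k+2) * real (k+1) \<le> (real (k+3))^4"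
      by (simp add: algebra_simps power4_eq_xxxx power2_eq_square)
    define a where "a = fact (k+2) * esym (k+2) V w"
    define b where "b = fact (k+1) * esym (k+1) V w"
    define c where "c = fact k * esym k V w"
    define X where "X = fact (k+3) * esym (k+3) V w"
    define K1 where "K1 = real (k+1)"
    define K2 where "K2 = real (k+2)"
    define K3 where "K3 = real (k+3)"
    define C1 where "C1 = K1 * (K1 - 1) / 2"
    define C2 where "C2 = K2 * (K2 - 1) / 2"
    define C3 where "C3 = K3 * (K3 - 1) / 2"
    define e where "e = \<eta> * q"
    have e0: "e \<ge> 0" using eta0 q0 unfolding e_def by simp
    have K0: "K1 \<ge> 0" "K2 \<ge> 0" "C1 \<ge> 0" unfolding K1_def K2_def C1_def by auto
    have m: "X \<le> a - K2 * q * b + K2 * K1 * e * c"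
      using main unfolding a_def b_def c_def X_def K1_def K2_def e_def by (simp add: algebra_simps)
    have lo': "b \<ge> 1 - C1 * q" using lo unfolding b_def C1_def K1_def by simp
    have h1: "K2 * q * b \<ge> K2 * q * (1 - C1 * q)"
      by (rule mult_left_mono[OF lo']) (use K0 q0 in simp)
    have h1': "K2 * q * (1 - C1 * q) = K2 * q - K2 * C1 * (q * q)" by (simp add: algebra_simps)
    have h2: "K2 * K1 * e * c \<le> K2 * K1 * e"
      using cr e0 K0 unfolding c_def by (simp add: mult_left_le)
    have h3: "a \<le> 1 - C2 * q + K2^4 * e"
      using U2 unfolding a_def C2_def K2_def e_def by (simp add: algebra_simps)
    have h4: "K2 * C1 * (q * q) \<le> K2 * C1 * e"
      unfolding e_def by (rule mult_left_mono[OF q2]) (use K0 in simp)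
    have h5: "C2 * q + K2 * q = C3 * q" unfolding C2_def C3_def K2_def K3_def by (simp add: algebra_simps)
    have h6: "K2^4 + K2 * C1 + K2 * K1 \<le> K3^4"
      using poly unfolding K1_def K2_def K3_def C1_def by (simp add: algebra_simps)
    have h7: "(K2^4 + K2 * C1 + K2 * K1) * e \<le> K3^4 * e" by (rule mult_right_mono[OF h6 e0])
    have h8: "(K2^4 + K2 * C1 + K2 * K1) * e = K2^4 * e + K2 * C1 * e + K2 * K1 * e" by (simp add: algebra_simps)
    have "X \<le> 1 - C3 * q + K3^4 * e"
      using m h1 h1' h2 h3 h4 h5 h7 h8 by linarith
    then have "U (k+3)" unfolding U_def X_def C3_def K3_def e_def by (simp add: algebra_simps)
    then show ?case using Suc.IH by (simp add: eval_nat_numeral)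
  qed
  then show ?thesis unfolding U_def q_def by blast
qed

lemma perturb_edge:
  fixes w :: "nat \<Rightarrow> real"
  assumes fe: "finite e" and uv: "u \<noteq> v" and w: "\<And>x. 0 \<le> w x \<and> w x \<le> 1" and eps: "\<epsilon> \<ge> 0"
  defines "w' \<equiv> w(u := w u + \<epsilon>, v := w v - \<epsilon>)"
  shows "(\<Prod>x\<in>e. w' x) \<ge> (\<Prod>x\<in>e. w x) + \<epsilon> * ((if u \<in> e then \<Prod>x\<in>e-{u}. w x else 0) - (if v \<in> e then \<Prod>x\<in>e-{v}. w x else 0)) - \<epsilon>^2"
proof -
  have eq: "\<And>A. u \<notin> A \<Longrightarrow> v \<notin> A \<Longrightarrow> (\<Prod>x\<in>A. w' x) = (\<Prod>x\<in>A. w x)"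
    unfolding w'_def by (rule prod.cong) auto
  have e2: "\<epsilon>^2 \<ge> 0" by simp
  show ?thesis
  proof (cases "u \<in> e")
    case ue: True
    show ?thesis
    proof (cases "v \<in> e")
      case ve: True
      define P where "P = (\<Prod>x\<in>e-{u}-{v}. w x)"
      have P01: "0 \<le> P" "P \<le> 1" unfolding P_def using w by (auto intro: prod_nonneg prod_le_1)
      have "(\<Prod>x\<in>e. w' x) = w' u * (\<Prod>x\<in>e-{u}. w' x)" using fe ue by (simp add: prod.remove)
      also have "(\<Prod>x\<in>e-{u}. w' x) = w' v * (\<Prod>x\<in>e-{u}-{v}. w' x)" using fe ve uv by (simp add: prod.remove)
      also have "(\<Prod>x\<in>e-{u}-{v}. w' x) = P" unfolding P_def by (rule eq) auto
      finally have L: "(\<Prod>x\<in>e. w' x) = (w u + \<epsilon>) * ((w v - \<epsilon>) * P)" using uv unfolding w'_def by simp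
      have R1: "(\<Prod>x\<in>e. w x) = w u * (w v * P)" unfolding P_def using fe ue ve uv
        by (simp add: prod.remove)
      have R2: "(\<Prod>x\<in>e-{u}. w x) = w v * P" unfolding P_def using fe ue ve uv
        by (simp add: prod.remove)
      have R3: "(\<Prod>x\<in>e-{v}. w x) = w u * P" unfolding P_def using fe ue ve uv
        by (simp add: prod.remove Diff_insert2[symmetric] insert_commute)
      have "\<epsilon>^2 * P \<le> \<epsilon>^2" using P01 e2 by (simp add: mult_left_le)
      then show ?thesis using ue ve L R1 R2 R3 by (simp add: algebra_simps power2_eq_square)
    next
      case ve: False
      have "(\<Prod>x\<in>e. w' x) = w' u * (\<Prod>x\<in>e-{u}. w' x)" using fe ue by (simp add: prod.remove)
      also have "(\<Prod>x\<in>e-{u}. w' x) = (\<Prod>x\<in>e-{u}. w x)" by (rule eq) (use ve in auto)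
      finally have L: "(\<Prod>x\<in>e. w' x) = (w u + \<epsilon>) * (\<Prod>x\<in>e-{u}. w x)" using uv unfolding w'_def by simp
      have R: "(\<Prod>x\<in>e. w x) = w u * (\<Prod>x\<in>e-{u}. w x)" using fe ue by (simp add: prod.remove)
      show ?thesis using L R ue ve e2 by (simp add: algebra_simps; linarith)
    qed
  next
    case ue: False
    show ?thesis
    proof (cases "v \<in> e")
      case ve: True
      have "(\<Prod>x\<in>e. w' x) = w' v * (\<Prod>x\<in>e-{v}. w' x)" using fe ve by (simp add: prod.remove)
      also have "(\<Prod>x\<in>e-{v}. w' x) = (\<Prod>x\<in>e-{v}. w x)" by (rule eq) (use ue in auto)
      finally have L: "(\<Prod>x\<in>e. w' x) = (w v - \<epsilon>) * (\<Prod>x\<in>e-{v}. w x)" using uv unfolding w'_def by simp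
      have R: "(\<Prod>x\<in>e. w x) = w v * (\<Prod>x\<in>e-{v}. w x)" using fe ve by (simp add: prod.remove)
      show ?thesis using L R ue ve e2 by (simp add: algebra_simps; linarith)
    next
      case ve: False
      show ?thesis using eq[OF ue ve] ue ve e2 by simp
    qed
  qed
qed

lemma perturb:
  fixes w :: "nat \<Rightarrow> real"
  assumes fG: "finite G" and fe: "\<And>e. e \<in> G \<Longrightarrow> finite e" and uv: "u \<noteq> v"
    and w: "\<And>x. 0 \<le> w x \<and> w x \<le> 1" and eps: "\<epsilon> \<ge> 0"
  shows "wgraph (w(u := w u + \<epsilon>, v := w v - \<epsilon>)) G \<ge> wgraph w G + \<epsilon> * (dpart G w u - dpart G w v) - \<epsilon>^2 * real (card G)"
proof -
  define w' where "w' = w(u := w u + \<epsilon>, v := w v - \<epsilon>)"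
  have S: "(\<Sum>e\<in>G. (\<Prod>x\<in>e. w x) + \<epsilon> * ((if u \<in> e then \<Prod>x\<in>e-{u}. w x else 0) - (if v \<in> e then \<Prod>x\<in>e-{v}. w x else 0)) - \<epsilon>^2) \<le> wgraph w' G"
    unfolding wgraph_def w'_def by (rule sum_mono, rule perturb_edge[OF fe uv w eps]) auto
  have "(\<Sum>e\<in>G. (\<Prod>x\<in>e. w x) + \<epsilon> * ((if u \<in> e then \<Prod>x\<in>e-{u}. w x else 0) - (if v \<in> e then \<Prod>x\<in>e-{v}. w x else 0)) - \<epsilon>^2)
     = wgraph w G + \<epsilon> * ((\<Sum>e\<in>G. if u \<in> e then \<Prod>x\<in>e-{u}. w x else 0) - (\<Sum>e\<in>G. if v \<in> e then \<Prod>x\<in>e-{v}. w x else 0)) - \<epsilon>^2 * real (card G)"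
    unfolding wgraph_def by (simp add: sum.distrib sum_subtractf sum_distrib_left[symmetric])
  moreover have "(\<Sum>e\<in>G. if u \<in> e then \<Prod>x\<in>e-{u}. w x else 0) = dpart G w u"
    unfolding dpart_def using fG by (simp add: sum.inter_filter)
  moreover have "(\<Sum>e\<in>G. if v \<in> e then \<Prod>x\<in>e-{v}. w x else 0) = dpart G w v"
    unfolding dpart_def using fG by (simp add: sum.inter_filter)
  ultimately show ?thesis using S unfolding w'_def by simp
qed

lemma weighting_le1:
  assumes "weighting w" "finite I"
  shows "(\<Sum>x\<in>I. w x) \<le> 1"
proof -
  have "summable w" "suminf w = 1" using assms(1) unfolding weighting_def by (auto simp: sums_iff)
  then show ?thesis using sum_le_suminf[of w I] assms unfolding weighting_def by auto
qed

lemma weighting_bounds: "weighting w \<Longrightarrow> 0 \<le> w x \<and> w x \<le> 1"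
  using weighting_le1[of w "{x}"] unfolding weighting_def by auto

lemma weighting_finite:
  assumes "finite V" "\<And>x. 0 \<le> w x" "\<And>x. x \<notin> V \<Longrightarrow> w x = 0" "(\<Sum>x\<in>V. w x) = 1"
  shows "weighting w"
  unfolding weighting_def using sums_finite[of V w] assms by auto

lemma weighting_ex: "weighting (\<lambda>x. if x = 0 then 1 else 0)"
  by (rule weighting_finite[of "{0}"]) auto

lemma rgraph_Ksets:
  assumes "rgraph r G"
  shows "finite (\<Union>G)" "G \<subseteq> Ksets (\<Union>G) r"
  using assms unfolding rgraph_def Ksets_def by auto

lemma wgraph_nonneg: "(\<And>x. 0 \<le> w x) \<Longrightarrow> 0 \<le> wgraph w G"
  unfolding wgraph_def by (intro sum_nonneg prod_nonneg) auto

lemma wgraph_le_esym: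
  assumes "finite V" "G \<subseteq> Ksets V r" "\<And>x. 0 \<le> w x"
  shows "wgraph w G \<le> esym r V w"
  unfolding esym_def wgraph_def
  by (rule sum_mono2[OF finite_Ksets[OF assms(1)] assms(2)]) (use assms in \<open>auto intro: prod_nonneg\<close>)

lemma wgraph_le1:
  assumes "rgraph r G" "weighting w"
  shows "wgraph w G \<le> 1"
proof -
  let ?V = "\<Union>G"
  have w0: "\<And>x. 0 \<le> w x" using assms(2) unfolding weighting_def by auto
  have "wgraph w G \<le> esym r ?V w" using wgraph_le_esym rgraph_Ksets[OF assms(1)] w0 by blast
  also have "\<dots> \<le> fact r * esym r ?V w"
    using esym_nonneg[of w r ?V, OF w0] by (simp add: mult_le_cancel_right1)
  also have "\<dots> \<le> (\<Sum>x\<in>?V. w x) ^ r" by (rule esym_crude[OF rgraph_Ksets(1)[OF assms(1)] w0])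
  also have "\<dots> \<le> 1"
    using weighting_le1[OF assms(2) rgraph_Ksets(1)[OF assms(1)]] by (simp add: sum_nonneg w0 power_le_one)
  finally show ?thesis .
qed

lemma lag_bdd: "rgraph r G \<Longrightarrow> bdd_above ((\<lambda>w. wgraph w G) ` {w. weighting w})"
  using wgraph_le1 by (intro bdd_aboveI[of _ 1]) blast

lemma lag_ge: "rgraph r G \<Longrightarrow> weighting w \<Longrightarrow> wgraph w G \<le> lagrangian G"
  unfolding lagrangian_def by (rule cSUP_upper) (auto intro: lag_bdd)

lemma lag_le1: "rgraph r G \<Longrightarrow> lagrangian G \<le> 1"
  unfolding lagrangian_def by (rule cSUP_least) (use weighting_ex wgraph_le1 in auto)

lemma wgraph_cong: "(\<And>x. x \<in> \<Union>G \<Longrightarrow> w x = w' x) \<Longrightarrow> wgraph w G = wgraph w' G"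
  unfolding wgraph_def by (intro sum.cong refl prod.cong) auto

lemma dpart_mono:
  assumes "G \<subseteq> G'" "finite G'" "\<And>x. 0 \<le> w x"
  shows "dpart G w v \<le> dpart G' w v"
  unfolding dpart_def by (rule sum_mono2) (use assms in \<open>auto intro: prod_nonneg\<close>)

lemma key:
  fixes G :: "nat set set" and r :: nat and T \<eta> :: real
  assumes r: "r \<ge> 1" and rg: "rgraph r G" and T0: "T \<ge> 0" and eta: "0 < \<eta>" "\<eta> \<le> 1"
    and H1: "(1 - \<eta>)^(r-1) / fact r \<le> T"
    and H2: "\<And>w. (\<And>x. 0 \<le> w x) \<Longrightarrow> (\<And>x. x \<notin> \<Union>G \<Longrightarrow> w x = 0) \<Longrightarrow> (\<Sum>x\<in>\<Union>G. w x) = 1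
              \<Longrightarrow> (\<And>x. x \<in> \<Union>G \<Longrightarrow> w x \<le> \<eta>) \<Longrightarrow> wgraph w G \<le> T"
  shows "lagrangian G \<le> T"
proof (rule ccontr)
  assume nt: "\<not> ?thesis"
  define L where "L = lagrangian G"
  define d where "d = L - T"
  have d0: "d > 0" using nt unfolding d_def L_def by simp
  define V where "V = \<Union>G"
  have fV: "finite V" and GK: "G \<subseteq> Ksets V r" using rgraph_Ksets[OF rg] unfolding V_def by auto
  have fG: "finite G" using rg unfolding rgraph_def by auto
  have fe: "\<And>e. e \<in> G \<Longrightarrow> finite e" using rg unfolding rgraph_def by auto
  have ce: "\<And>e. e \<in> G \<Longrightarrow> card e = r" using rg unfolding rgraph_def by auto
  define n where "n = real (card G)"
  have n0: "n \<ge> 0" unfolding n_def by simp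
  define \<epsilon> where "\<epsilon> = min \<eta> (d / (2 * (2 + n)))"
  have e0: "\<epsilon> > 0" unfolding \<epsilon>_def using eta d0 n0 by simp
  have e1: "\<epsilon> \<le> \<eta>" "\<epsilon> \<le> 1" unfolding \<epsilon>_def using eta by auto
  have esmall: "\<epsilon>^2 + \<epsilon> * (1 + n) < d"
  proof -
    have "\<epsilon>^2 \<le> \<epsilon>" using e0 e1 by (simp add: power2_eq_square mult_left_le)
    moreover have "\<epsilon> * (2 + n) \<le> d / 2"
    proof -
      have "\<epsilon> \<le> d / (2 * (2 + n))" unfolding \<epsilon>_def by simp
      then have "\<epsilon> * (2 + n) \<le> d / (2 * (2 + n)) * (2 + n)" using n0 by (intro mult_right_mono) auto
      also have "\<dots> = d / 2" using n0 by (simp add: field_simps)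
      finally show ?thesis .
    qed
    ultimately show ?thesis using d0 by (simp add: algebra_simps)
  qed
  have "L - \<epsilon>^2 < L" using e0 by simp
  then obtain w0 where w0: "weighting w0" and w0L: "wgraph w0 G > L - \<epsilon>^2"
    unfolding L_def lagrangian_def using less_cSUP_iff[OF _ lag_bdd[OF rg], of "L - \<epsilon>^2"] weighting_ex
    by (auto simp: L_def lagrangian_def)
  have w0nn: "\<And>x. 0 \<le> w0 x" using w0 unfolding weighting_def by auto
  define s where "s = (\<Sum>x\<in>V. w0 x)"
  have s1: "s \<le> 1" unfolding s_def using weighting_le1[OF w0 fV] .
  have s0: "s \<ge> 0" unfolding s_def by (simp add: sum_nonneg w0nn)
  show False
  proof (cases "s = 0")
    case True
    then have z: "\<And>x. x \<in> V \<Longrightarrow> w0 x = 0" unfolding s_def using sum_nonneg_eq_0_iff[OF fV] w0nn by blast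
    have "wgraph w0 G = 0" unfolding wgraph_def
    proof (rule sum.neutral, rule ballI)
      fix e assume e: "e \<in> G"
      then have "e \<noteq> {}" using ce[OF e] r by auto
      then obtain x where "x \<in> e" by blast
      then have "w0 x = 0" using z e unfolding V_def by auto
      then show "(\<Prod>x\<in>e. w0 x) = 0" using fe[OF e] \<open>x \<in> e\<close> by (metis prod_zero_iff)
    qed
    moreover have "\<epsilon> * (1 + n) \<ge> 0" using e0 n0 by simp
    ultimately show False using w0L esmall d0 T0 unfolding d_def by linarith
  next
    case False
    then have sp: "s > 0" using s0 by simp
    define w where "w x = (if x \<in> V then w0 x / s else 0)" for x
    have wnn: "\<And>x. 0 \<le> w x" unfolding w_def using w0nn s0 by simp
    have woff: "\<And>x. x \<notin> V \<Longrightarrow> w x = 0" unfolding w_def by simp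
    have wsum: "(\<Sum>x\<in>V. w x) = 1" unfolding w_def using sp by (simp add: sum_divide_distrib[symmetric] s_def)
    have ww: "weighting w" by (rule weighting_finite[OF fV wnn woff wsum])
    have wb: "\<And>x. 0 \<le> w x \<and> w x \<le> 1" using weighting_bounds[OF ww] .
    have "wgraph w G = wgraph w0 G / s^r"
      unfolding wgraph_def sum_divide_distrib
    proof (rule sum.cong[OF refl])
      fix e assume e: "e \<in> G"
      have "(\<Prod>x\<in>e. w x) = (\<Prod>x\<in>e. w0 x / s)"
        by (rule prod.cong[OF refl]) (use e in \<open>auto simp: w_def V_def\<close>)
      also have "\<dots> = (\<Prod>x\<in>e. w0 x) / s^r" using ce[OF e] by (simp add: prod_dividef)
      finally show "(\<Prod>x\<in>e. w x) = (\<Prod>x\<in>e. w0 x) / s^r" .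
    qed
    moreover have "wgraph w0 G / s^r \<ge> wgraph w0 G"
    proof -
      have "s^r \<le> 1" "s^r > 0" using s0 s1 sp by (auto simp: power_le_one)
      then show ?thesis using wgraph_nonneg[of w0 G, OF w0nn] by (simp add: le_divide_eq mult_left_le)
    qed
    ultimately have wL: "wgraph w G > L - \<epsilon>^2" using w0L by simp
    have Vne: "V \<noteq> {}" using sp unfolding s_def by auto
    obtain v where v: "v \<in> V" "\<And>x. x \<in> V \<Longrightarrow> w x \<le> w v"
    proof -
      have "Max (w ` V) \<in> w ` V" using fV Vne by simp
      then obtain v where "v \<in> V" "w v = Max (w ` V)" by auto
      moreover have "\<And>x. x \<in> V \<Longrightarrow> w x \<le> Max (w ` V)" using fV by simp
      ultimately show ?thesis using that by auto
    qed
    define a where "a = w v"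
    show False
    proof (cases "a \<le> \<eta>")
      case True
      have "wgraph w G \<le> T"
      proof (rule H2)
        show "\<And>x. 0 \<le> w x" by (rule wnn)
        show "\<And>x. x \<notin> \<Union>G \<Longrightarrow> w x = 0" using woff unfolding V_def by blast
        show "(\<Sum>x\<in>\<Union>G. w x) = 1" using wsum unfolding V_def .
        show "\<And>x. x \<in> \<Union>G \<Longrightarrow> w x \<le> \<eta>" using v(2) True unfolding V_def a_def by (meson order_trans)
      qed
      moreover have "\<epsilon> * (1 + n) \<ge> 0" using e0 n0 by simp
      ultimately show False using wL esmall d0 unfolding d_def by linarith
    next
      case False
      then have aeta: "a > \<eta>" by simp
      have Dle: "dpart G w u \<le> dpart G w v + \<epsilon> * (1 + n)" if u: "u \<in> V" for u
      proof (cases "u = v")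
        case True then show ?thesis using e0 n0 by simp
      next
        case uv: False
        define w' where "w' = w(u := w u + \<epsilon>, v := w v - \<epsilon>)"
        have w'nn: "\<And>x. 0 \<le> w' x" unfolding w'_def using wnn aeta e1 e0 a_def by auto
        have w'off: "\<And>x. x \<notin> V \<Longrightarrow> w' x = 0" unfolding w'_def using woff u v by auto
        have w'alt: "w' x = w x + (if x = u then \<epsilon> else 0) - (if x = v then \<epsilon> else 0)" for x
          unfolding w'_def using uv by auto
        have w'sum: "(\<Sum>x\<in>V. w' x) = 1"
          unfolding w'alt using fV u v wsum by (simp add: sum.distrib sum_subtractf)
        have "weighting w'" by (rule weighting_finite[OF fV w'nn w'off w'sum])
        then have "wgraph w' G \<le> L" unfolding L_def by (rule lag_ge[OF rg])
        moreover have "wgraph w' G \<ge> wgraph w G + \<epsilon> * (dpart G w u - dpart G w v) - \<epsilon>^2 * n"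
          unfolding w'_def n_def by (rule perturb[OF fG fe uv wb]) (use e0 in auto)
        ultimately have "\<epsilon> * (dpart G w u - dpart G w v) < \<epsilon> * (\<epsilon> * (1 + n))"
          using wL by (simp add: algebra_simps power2_eq_square)
        then have "dpart G w u - dpart G w v < \<epsilon> * (1 + n)" using e0 by simp
        then show ?thesis by simp
      qed
      have "real r * wgraph w G = (\<Sum>u\<in>V. w u * dpart G w u)" using euler[OF fV GK] by simp
      also have "\<dots> \<le> (\<Sum>u\<in>V. w u * (dpart G w v + \<epsilon> * (1 + n)))"
        by (rule sum_mono, rule mult_left_mono) (use Dle wnn in auto)
      also have "\<dots> = dpart G w v + \<epsilon> * (1 + n)" using wsum by (simp add: sum_distrib_right[symmetric])
      finally have E1: "real r * wgraph w G \<le> dpart G w v + \<epsilon> * (1 + n)" .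
      have "dpart G w v \<le> dpart (Ksets V r) w v" by (rule dpart_mono[OF GK finite_Ksets[OF fV] wnn])
      also have "\<dots> = esym (r-1) (V-{v}) w" using dpart_K[OF fV v(1) r] .
      finally have E2: "dpart G w v \<le> esym (r-1) (V-{v}) w" .
      have E3: "fact (r-1) * esym (r-1) (V-{v}) w \<le> (1 - a)^(r-1)"
      proof -
        have "fact (r-1) * esym (r-1) (V-{v}) w \<le> (\<Sum>x\<in>V-{v}. w x)^(r-1)"
          by (rule esym_crude) (use fV wnn in auto)
        also have "(\<Sum>x\<in>V-{v}. w x) = 1 - a" using wsum fV v(1) unfolding a_def by (simp add: sum_diff1)
        finally show ?thesis .
      qed
      have E4: "(1 - a)^(r-1) \<le> (1 - \<eta>)^(r-1)"
        by (rule power_mono) (use aeta wb[of v] a_def in auto)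
      have fr: "fact r = real r * fact (r-1)" using r by (simp add: fact_reduce)
      have fpos: "fact (r-1) > (0::real)" by simp
      have "esym (r-1) (V-{v}) w \<le> (1 - \<eta>)^(r-1) / fact (r-1)"
        using E3 E4 fpos by (simp add: le_divide_eq mult.commute)
      then have "real r * wgraph w G \<le> (1 - \<eta>)^(r-1) / fact (r-1) + \<epsilon> * (1 + n)" using E1 E2 by linarith
      then have "wgraph w G \<le> ((1 - \<eta>)^(r-1) / fact (r-1) + \<epsilon> * (1 + n)) / real r"
        using r by (simp add: le_divide_eq mult.commute)
      also have "\<dots> = (1 - \<eta>)^(r-1) / fact r + \<epsilon> * (1 + n) / real r"
        using fr by (simp add: add_divide_distrib)
      also have "\<epsilon> * (1 + n) / real r \<le> \<epsilon> * (1 + n)"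
      proof -
        have "\<epsilon> * (1 + n) * 1 \<le> \<epsilon> * (1 + n) * real r"
          by (rule mult_left_mono) (use r e0 n0 in auto)
        then show ?thesis using r by (simp add: pos_divide_le_eq)
      qed
      finally have "wgraph w G \<le> T + \<epsilon> * (1 + n)" using H1 by linarith
      then show False using wL esmall unfolding d_def by linarith
    qed
  qed
qed

lemma case2:
  fixes G :: "nat set set" and w :: "nat \<Rightarrow> real"
  assumes rg: "rgraph r G" and cG: "fact r * real (card G) \<le> y^r" and y: "y \<ge> 0"
    and wnn: "\<And>x. 0 \<le> w x" and wsum: "(\<Sum>x\<in>\<Union>G. w x) = 1" and eta: "\<And>x. x \<in> \<Union>G \<Longrightarrow> w x \<le> \<eta>"
  shows "(fact r * wgraph w G)^2 \<le> (y * (\<Sum>x\<in>\<Union>G. (w x)^2))^r"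
    and "fact r * wgraph w G \<le> 1 - real r * (real r - 1) / 2 * (\<Sum>x\<in>\<Union>G. (w x)^2) + (real r)^4 * \<eta> * (\<Sum>x\<in>\<Union>G. (w x)^2)"
proof -
  define V where "V = \<Union>G"
  have fV: "finite V" and GK: "G \<subseteq> Ksets V r" using rgraph_Ksets[OF rg] unfolding V_def by auto
  define q where "q = (\<Sum>x\<in>V. (w x)^2)"
  have "wgraph w G \<le> esym r V w" by (rule wgraph_le_esym[OF fV GK wnn])
  then have "fact r * wgraph w G \<le> fact r * esym r V w" by simp
  also have "\<dots> \<le> 1 - real r * (real r - 1) / 2 * q + (real r)^4 * \<eta> * q"
    unfolding q_def by (rule esym_upper[OF fV wnn]) (use wsum eta in \<open>auto simp: V_def\<close>)
  finally show "fact r * wgraph w G \<le> 1 - real r * (real r - 1) / 2 * (\<Sum>x\<in>\<Union>G. (w x)^2) + (real r)^4 * \<eta> * (\<Sum>x\<in>\<Union>G. (w x)^2)"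
    unfolding q_def V_def .
  have q0: "0 \<le> q" unfolding q_def by (simp add: sum_nonneg)
  define w2 where "w2 x = (w x)^2" for x
  have w2nn: "\<And>x. 0 \<le> w2 x" unfolding w2_def by simp
  have "(wgraph w G)^2 \<le> (\<Sum>e\<in>G. (\<Prod>x\<in>e. w x)^2) * real (card G)"
    unfolding wgraph_def by (rule sum_squared_le_sum_of_squares)
  also have "(\<Sum>e\<in>G. (\<Prod>x\<in>e. w x)^2) = wgraph w2 G"
    unfolding wgraph_def w2_def by (simp add: prod_power_distrib)
  also have "wgraph w2 G \<le> esym r V w2" by (rule wgraph_le_esym[OF fV GK w2nn])
  finally have "(wgraph w G)^2 \<le> esym r V w2 * real (card G)" by (simp add: mult_right_mono)
  then have A: "(fact r)^2 * (wgraph w G)^2 \<le> (fact r)^2 * (esym r V w2 * real (card G))"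
    by (rule mult_left_mono) simp
  have B: "fact r * esym r V w2 \<le> q^r"
    using esym_crude[of V w2 r, OF fV w2nn] unfolding q_def w2_def by simp
  have C: "(fact r)^2 * (esym r V w2 * real (card G)) = (fact r * esym r V w2) * (fact r * real (card G))"
    by (simp add: power2_eq_square algebra_simps)
  have "(fact r * esym r V w2) * (fact r * real (card G)) \<le> q^r * y^r"
    by (rule mult_mono[OF B cG]) (use esym_nonneg[of w2, OF w2nn] q0 in auto)
  then have D0: "(fact r)^2 * (esym r V w2 * real (card G)) \<le> q^r * y^r"
    by (subst C)
  have D: "(fact r)^2 * (esym r V w2 * real (card G)) \<le> (y * q)^r"
    using D0 by (simp only: power_mult_distrib mult.commute)
  have "(fact r * wgraph w G)^2 = (fact r)^2 * (wgraph w G)^2" by (simp add: power_mult_distrib)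
  also have "\<dots> \<le> (fact r)^2 * (esym r V w2 * real (card G))" by (rule A)
  also have "\<dots> \<le> (y * q)^r" by (rule D)
  finally have "(fact r * wgraph w G)^2 \<le> (y * q)^r" .
  then show "(fact r * wgraph w G)^2 \<le> (y * (\<Sum>x\<in>\<Union>G. (w x)^2))^r"
    unfolding q_def V_def .
qed

lemma bonf2:
  fixes x :: real
  assumes "0 \<le> x" "x \<le> 1"
  shows "(1 - x)^n \<le> 1 - real n * x + real n * (real n - 1) / 2 * x^2"
proof (induction n)
  case 0 then show ?case by simp
next
  case (Suc n)
  have "(1 - x)^(Suc n) = (1 - x) * (1 - x)^n" by simp
  also have "\<dots> \<le> (1 - x) * (1 - real n * x + real n * (real n - 1) / 2 * x^2)"
    by (rule mult_left_mono[OF Suc.IH]) (use assms in simp)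
  also have "\<dots> = 1 - real (Suc n) * x + real (Suc n) * (real (Suc n) - 1) / 2 * x^2 - real n * (real n - 1) / 2 * x^3"
    by (simp add: field_simps power2_eq_square power3_eq_cube)
  also have "\<dots> \<le> 1 - real (Suc n) * x + real (Suc n) * (real (Suc n) - 1) / 2 * x^2"
  proof -
    have "real n * (real n - 1) / 2 * x^3 \<ge> 0"
    proof (cases n)
      case 0 then show ?thesis by simp
    next
      case (Suc m) then show ?thesis using assms by simp
    qed
    then show ?thesis by simp
  qed
  finally show ?case .
qed

lemma num_case1:
  fixes r :: nat and t :: real
  assumes r: "r \<ge> 3" and t: "t \<ge> 3 * real r ^ 5"
  shows "(1 - real r / t)^(r-1) \<le> 1 - real r * (real r - 1) / 2 / (t - 1) - 1 / t^2"
proof -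
  define R where "R = real r * (real r - 1) / 2"
  define Q where "Q = (real r - 1) * (real r - 2) / 2 * (real r)^2"
  have r3: "real r \<ge> 3" using r by simp
  have r5: "real r ^ 5 \<ge> real r ^ 4" using r3 by (simp add: power_increasing)
  have r4: "real r ^ 4 \<ge> 81" using power_mono[OF r3, of 4] by simp
  have t1: "t \<ge> 3 * real r ^ 4" using t r5 by linarith
  have tpos: "t > 0" using t1 r4 by linarith
  have R1: "R \<ge> 1"
  proof -
    have "real r * (real r - 1) \<ge> 3 * 2" using r3 by (intro mult_mono) auto
    then show ?thesis unfolding R_def by simp
  qed
  have Qle: "Q \<le> real r ^ 4" unfolding Q_def
  proof -
    have "(real r - 1) * (real r - 2) \<le> real r * real r" using r3 by (intro mult_mono) auto
    moreover have "real r * real r \<ge> 0" by simp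
    ultimately have "(real r - 1) * (real r - 2) / 2 \<le> real r * real r" by linarith
    then have "(real r - 1) * (real r - 2) / 2 * (real r)^2 \<le> real r * real r * (real r)^2"
      by (rule mult_right_mono) simp
    then show "(real r - 1) * (real r - 2) / 2 * (real r)^2 \<le> real r ^ 4"
      by (simp add: power2_eq_square power4_eq_xxxx)
  qed
  have x01: "0 \<le> real r / t" "real r / t \<le> 1"
  proof -
    show "0 \<le> real r / t" using tpos by simp
    have "real r \<le> real r ^ 4" using r3 by (intro self_le_power) auto
    then have "real r \<le> t" using t1 r4 by linarith
    then show "real r / t \<le> 1" using tpos by simp
  qed
  have "(1 - real r / t)^(r-1) \<le> 1 - real (r-1) * (real r / t) + real (r-1) * (real (r-1) - 1) / 2 * (real r / t)^2"
    by (rule bonf2[OF x01])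
  also have "\<dots> = 1 - 2 * R / t + Q / t^2"
    unfolding R_def Q_def using r tpos by (simp add: of_nat_diff field_simps power2_eq_square)
  also have "\<dots> \<le> 1 - R / (t - 1) - 1 / t^2"
  proof -
    have key: "R * t^2 + (1 + Q) * (t - 1) \<le> 2 * R * t * (t - 1)"
    proof -
      have t2: "t - 2 \<ge> real r ^ 4 + 1" using t1 r4 by linarith
      have "R * (t - 2) \<ge> 1 * (t - 2)" using R1 t2 r4 by (intro mult_right_mono) auto
      then have "R * (t - 2) \<ge> t - 2" by simp
      then have "R * (t - 2) \<ge> 1 + Q" using t2 Qle by linarith
      then have "R * (t - 2) * t \<ge> (1 + Q) * t" using tpos by (intro mult_right_mono) auto
      moreover have Q0: "Q \<ge> 0" unfolding Q_def using r3 by simp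
      ultimately show ?thesis using tpos by (simp add: algebra_simps power2_eq_square)
    qed
    have t1': "t - 1 > 0" using t1 r4 by linarith
    have "R / (t - 1) + (1 + Q) / t^2 = (R * t^2 + (1 + Q) * (t - 1)) / (t^2 * (t - 1))"
      using tpos t1' by (simp add: field_simps)
    also have "\<dots> \<le> (2 * R * t * (t - 1)) / (t^2 * (t - 1))"
      by (rule divide_right_mono[OF key]) (use tpos t1' in simp)
    also have "\<dots> = 2 * R / t" using tpos t1' by (simp add: field_simps power2_eq_square)
    finally have "R / (t - 1) + (1 + Q) / t^2 \<le> 2 * R / t" .
    moreover have "(1 + Q) / t^2 = 1 / t^2 + Q / t^2" by (simp add: add_divide_distrib)
    ultimately show ?thesis by linarith
  qed
  finally show ?thesis unfolding R_def .
qed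

lemma num_poly:
  fixes R p t :: real
  assumes R: "R \<ge> 3" and p: "p \<ge> 1" and tE: "t > R + 3 + p" and t2: "t^2 \<ge> p * (R + 1) + (R + 3 + p)"
  shows "(R * t - p) * (t - (R + 1)) * (t - 1) \<ge> R * t^2 * (t - (R + 3 + p)) + (t - 1) * (t - (R + 3 + p))"
proof -
  define D where "D = R + 1"
  define E where "E = R + 3 + p"
  have tpos: "t > 0" using tE R p by linarith
  have id: "(R * t - p) * (t - D) * (t - 1) - (R * t^2 * (t - E) + (t - 1) * (t - E))
      = t^2 * ((R - 1) * (1 + p)) + t * (R * D + p * (D + 1) + E + 1) - p * D - E"
    unfolding E_def D_def by (simp add: algebra_simps power2_eq_square)
  have c1: "(R - 1) * (1 + p) \<ge> 1 * 1" by (intro mult_mono) (use R p in auto)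
  have "t^2 * ((R - 1) * (1 + p)) \<ge> t^2 * (1 * 1)" by (rule mult_left_mono[OF c1]) simp
  moreover have "t * (R * D + p * (D + 1) + E + 1) \<ge> 0"
    unfolding D_def E_def using tpos R p by (intro mult_nonneg_nonneg) auto
  ultimately have "(R * t - p) * (t - D) * (t - 1) - (R * t^2 * (t - E) + (t - 1) * (t - E)) \<ge> 0"
    using id t2 unfolding D_def E_def by linarith
  then show ?thesis unfolding D_def E_def by simp
qed

lemma num_case2b:
  fixes R p t q X :: real
  assumes R: "R \<ge> 3" and p: "p \<ge> 1" and tE: "t > R + 3 + p" and t2: "t^2 \<ge> p * (R + 1) + (R + 3 + p)"
    and tp: "R * t \<ge> p"
    and q0: "q \<ge> 0" and yq: "(t - (R + 3 + p)) * q > 1 - (R + 1) / t"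
    and X: "X \<le> 1 - R * q + p / t * q"
  shows "X \<le> 1 - R / (t - 1) - 1 / t^2"
proof -
  define D where "D = R + 1"
  define E where "E = R + 3 + p"
  have tpos: "t > 0" using tE R p by linarith
  have t1: "t - 1 > 0" using tE R p by linarith
  have yp: "t - E > 0" using tE unfolding E_def by simp
  have K0: "R - p / t \<ge> 0" using tp tpos by (simp add: field_simps)
  have qlow: "q > (t - D) / (t * (t - E))"
  proof -
    have "1 - D / t = (t - D) / t" using tpos by (simp add: field_simps)
    then have "(t - E) * q > (t - D) / t" using yq unfolding D_def E_def by simp
    then show ?thesis using yp tpos by (simp add: field_simps)
  qed
  have "X \<le> 1 - (R - p / t) * q" using X by (simp add: algebra_simps)
  also have "\<dots> \<le> 1 - (R - p / t) * ((t - D) / (t * (t - E)))"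
    using mult_left_mono[OF less_imp_le[OF qlow] K0] by simp
  also have "(R - p / t) * ((t - D) / (t * (t - E))) = (R * t - p) * (t - D) / (t^2 * (t - E))"
    using tpos yp by (simp add: field_simps power2_eq_square)
  finally have Xb: "X \<le> 1 - (R * t - p) * (t - D) / (t^2 * (t - E))" .
  have "(R * t - p) * (t - D) / (t^2 * (t - E)) \<ge> R / (t - 1) + 1 / t^2"
  proof -
    have P: "(R * t - p) * (t - D) * (t - 1) \<ge> R * t^2 * (t - E) + (t - 1) * (t - E)"
      using num_poly[OF R p tE t2] unfolding D_def E_def .
    have "R / (t - 1) + 1 / t^2 = (R * t^2 + (t - 1)) / (t^2 * (t - 1))"
      using tpos t1 by (simp add: field_simps)
    also have "\<dots> = ((R * t^2 + (t - 1)) * (t - E)) / ((t^2 * (t - 1)) * (t - E))"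
      using yp by simp
    also have "\<dots> = (R * t^2 * (t - E) + (t - 1) * (t - E)) / (t^2 * (t - 1) * (t - E))"
      by (simp add: algebra_simps)
    also have "\<dots> \<le> (R * t - p) * (t - D) * (t - 1) / (t^2 * (t - 1) * (t - E))"
      by (rule divide_right_mono[OF P]) (use tpos t1 yp in simp)
    also have "\<dots> = ((R * t - p) * (t - D)) * (t - 1) / ((t^2 * (t - E)) * (t - 1))"
      by (simp add: ac_simps)
    also have "\<dots> = (R * t - p) * (t - D) / (t^2 * (t - E))"
      using t1 by simp
    finally show ?thesis .
  qed
  then show ?thesis using Xb by linarith
qed

lemma num_case2a:
  fixes R t :: real
  assumes R: "R \<ge> 0" and t: "t \<ge> R + 2"
  shows "1 - (R + 1) / t \<le> 1 - R / (t - 1) - 1 / t^2"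
proof -
  have tpos: "t > 0" and t1: "t - 1 > 0" using R t by linarith+
  have P: "R * t^2 + (t - 1) \<le> (R + 1) * t * (t - 1)"
  proof -
    have "t * (t - (R + 2)) \<ge> 0" using t tpos by simp
    then show ?thesis by (simp add: algebra_simps power2_eq_square)
  qed
  have "R / (t - 1) + 1 / t^2 = (R * t^2 + (t - 1)) / (t^2 * (t - 1))"
    using tpos t1 by (simp add: field_simps)
  also have "\<dots> \<le> ((R + 1) * t * (t - 1)) / (t^2 * (t - 1))"
    by (rule divide_right_mono[OF P]) (use tpos t1 in simp)
  also have "\<dots> = (R + 1) / t" using tpos t1 by (simp add: field_simps power2_eq_square)
  finally show ?thesis by linarith
qed

lemma num_facts:
  fixes x t :: real
  assumes x: "x \<ge> 3" and t: "t \<ge> 3 * x ^ 5"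
  defines "R \<equiv> x * (x - 1) / 2"
  shows "R \<ge> 3" "t > R + 3 + x^5" "t^2 \<ge> x^5 * (R + 1) + (R + 3 + x^5)" "R * t \<ge> x^5"
    "t \<ge> R + 2" "x / t \<le> 1" "t > 1"
proof -
  have x2: "x^2 \<ge> 9" using power_mono[OF x, of 2] by simp
  have x25: "x^5 \<ge> x^2" using x by (intro power_increasing) auto
  have x57: "x^7 \<ge> x^5" using x by (intro power_increasing) auto
  have x710: "x^10 \<ge> x^7" using x by (intro power_increasing) auto
  have x15: "x^5 \<ge> x" using x by (intro self_le_power) auto
  have R2: "R \<le> x^2 / 2" unfolding R_def using x by (simp add: power2_eq_square field_simps)
  have "x * (x - 1) \<ge> 3 * 2" using x by (intro mult_mono) auto
  then show R3: "R \<ge> 3" unfolding R_def by simp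
  show tR: "t > R + 3 + x^5" using R2 x2 x25 t by linarith
  show "R * t \<ge> x^5"
  proof -
    have "R * t \<ge> 1 * t" using R3 t x25 x2 by (intro mult_right_mono) auto
    then show ?thesis using t x25 x2 by linarith
  qed
  show "t \<ge> R + 2" using tR x2 x25 by linarith
  show "t > 1" using tR R3 x2 x25 by linarith
  show "x / t \<le> 1" using t x15 x by (simp add: divide_le_eq) 
  have "x^5 * (R + 1) \<le> x^5 * x^2" using R2 x2 x25 x by (intro mult_left_mono) auto
  also have "\<dots> = x^7" by (simp add: power_add[symmetric])
  finally have A: "x^5 * (R + 1) \<le> x^7" .
  have "t^2 \<ge> (3 * x^5)^2" using t x2 x25 x by (intro power_mono) auto
  also have "(3 * x^5)^2 = 9 * x^10" by (simp add: power_mult_distrib power_mult[symmetric])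
  finally have "t^2 \<ge> 9 * x^10" .
  then show "t^2 \<ge> x^5 * (R + 1) + (R + 3 + x^5)" using A R2 x2 x25 x57 x710 by linarith
qed

lemma upper:
  fixes r :: nat and t :: real and G :: "nat set set"
  assumes r: "r \<ge> 3" and t: "t \<ge> 3 * real r ^ 5" and rg: "rgraph r G"
    and cG: "fact r * real (card G) \<le> (t - (real r * (real r - 1) / 2 + 3 + real r ^ 5))^r"
  shows "lagrangian G \<le> (1 - real r * (real r - 1) / 2 / (t - 1) - 1 / t^2) / fact r"
proof -
  define R where "R = real r * (real r - 1) / 2"
  define N where "N = 1 - R / (t - 1) - 1 / t^2"
  define \<eta> where "\<eta> = real r / t"
  define y where "y = t - (R + 3 + real r ^ 5)"
  have r3: "real r \<ge> 3" using r by simp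
  note nf = num_facts[OF r3 t, folded R_def]
  have tpos: "t > 0" using nf(7) by simp
  have eta0: "0 < \<eta>" "\<eta> \<le> 1" unfolding \<eta>_def using nf(6) tpos r by auto
  have c1: "(1 - \<eta>)^(r-1) \<le> N" unfolding \<eta>_def N_def R_def by (rule num_case1[OF r t])
  have N0: "N \<ge> 0" using c1 eta0 by (smt (verit) zero_le_power)
  have y0: "y > 0" unfolding y_def using nf(2) by simp
  have fp: "fact r > (0::real)" by simp
  have "lagrangian G \<le> N / fact r"
  proof (rule key[of r G "N / fact r" \<eta>])
    show "1 \<le> r" using r by simp
    show "rgraph r G" by (rule rg)
    show "0 \<le> N / fact r" using N0 by simp
    show "0 < \<eta>" "\<eta> \<le> 1" by (rule eta0)+
    show "(1 - \<eta>) ^ (r - 1) / fact r \<le> N / fact r" using c1 fp by (simp add: divide_right_mono)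
  next
    fix w :: "nat \<Rightarrow> real"
    assume wnn: "\<And>x. 0 \<le> w x" and woff: "\<And>x. x \<notin> \<Union>G \<Longrightarrow> w x = 0"
      and wsum: "(\<Sum>x\<in>\<Union>G. w x) = 1" and weta: "\<And>x. x \<in> \<Union>G \<Longrightarrow> w x \<le> \<eta>"
    define q where "q = (\<Sum>x\<in>\<Union>G. (w x)^2)"
    define X where "X = fact r * wgraph w G"
    have q0: "q \<ge> 0" unfolding q_def by (simp add: sum_nonneg)
    have X0: "X \<ge> 0" unfolding X_def using wgraph_nonneg[of w G, OF wnn] by simp
    have cG': "fact r * real (card G) \<le> y^r" using cG unfolding y_def R_def .
    have XA: "X^2 \<le> (y * q)^r" unfolding X_def q_def by (rule case2(1)[OF rg cG' less_imp_le[OF y0] wnn wsum weta])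
    have XB: "X \<le> 1 - real r * (real r - 1) / 2 * q + (real r)^4 * \<eta> * q"
      unfolding X_def q_def by (rule case2(2)[OF rg cG' less_imp_le[OF y0] wnn wsum weta])
    have "X \<le> N"
    proof (cases "y * q \<le> 1 - (R + 1) / t")
      case True
      define Z where "Z = y * q"
      have Z0: "Z \<ge> 0" unfolding Z_def using y0 q0 by simp
      have Z1: "Z \<le> 1" using True nf(1) tpos unfolding Z_def by (smt (verit) divide_nonneg_pos)
      have "Z^r \<le> Z^2" by (rule power_decreasing) (use r Z0 Z1 in auto)
      then have "X^2 \<le> Z^2" using XA unfolding Z_def by simp
      then have "X \<le> Z" using Z0 by (rule power2_le_imp_le)
      moreover have "1 - (R + 1) / t \<le> N" unfolding N_def
        by (rule num_case2a) (use nf(1) nf(5) in auto)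
      ultimately show ?thesis using True unfolding Z_def by linarith
    next
      case False
      have XB': "X \<le> 1 - R * q + real r ^ 5 / t * q"
      proof -
        have "(real r)^4 * \<eta> * q = real r ^ 5 / t * q" unfolding \<eta>_def
          by (simp add: power_Suc2[symmetric] del: power_Suc)
        then show ?thesis using XB unfolding R_def by simp
      qed
      have p1: "real r ^ 5 \<ge> 1" using r3 by (simp add: one_le_power)
      show ?thesis unfolding N_def
        by (rule num_case2b[OF nf(1) p1 nf(2) nf(3) nf(4) q0 _ XB'])
           (use False in \<open>simp add: y_def\<close>)
    qed
    then show "wgraph w G \<le> N / fact r" using fp unfolding X_def by (simp add: pos_le_divide_eq mult.commute)
  qed
  then show ?thesis unfolding N_def R_def .
qed

lemma card_Ksets: "finite V \<Longrightarrow> card (Ksets V k) = card V choose k"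
  unfolding Ksets_def by (rule n_subsets)

lemma sum_lessThan_real: "(\<Sum>i<r. real i) = real r * (real r - 1) / 2"
proof (induction r)
  case 0 then show ?case by simp
next
  case (Suc r)
  have "(\<Sum>i<Suc r. real i) = real r * (real r - 1) / 2 + real r" using Suc by simp
  also have "\<dots> = real (Suc r) * (real (Suc r) - 1) / 2" by (simp add: field_simps)
  finally show ?case .
qed

lemma weierstrass_prod:
  fixes x :: "nat \<Rightarrow> real"
  assumes "\<And>i. i < r \<Longrightarrow> 0 \<le> x i \<and> x i \<le> 1"
  shows "(\<Prod>i<r. 1 - x i) \<ge> 1 - (\<Sum>i<r. x i)"
  using assms
proof (induction r)
  case 0 then show ?case by simp
next
  case (Suc r)
  have IH: "(\<Prod>i<r. 1 - x i) \<ge> 1 - (\<Sum>i<r. x i)" using Suc by auto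
  have xr: "0 \<le> x r" "x r \<le> 1" using Suc.prems by auto
  have P0: "(\<Prod>i<r. 1 - x i) \<ge> 0" using Suc.prems by (intro prod_nonneg) auto
  have P1: "(\<Prod>i<r. 1 - x i) \<le> 1" using Suc.prems by (intro prod_le_1) auto
  have "(\<Prod>i<Suc r. 1 - x i) = (\<Prod>i<r. 1 - x i) - (\<Prod>i<r. 1 - x i) * x r" by (simp add: algebra_simps)
  moreover have "(\<Prod>i<r. 1 - x i) * x r \<le> x r" using mult_right_mono[OF P1 xr(1)] by simp
  moreover have "(\<Sum>i<Suc r. x i) = (\<Sum>i<r. x i) + x r" by simp
  ultimately show ?case using IH by linarith
qed

lemma binom_lower:
  fixes n r :: nat
  assumes "r \<le> n" "n > 0"
  shows "real (n choose r) / real n ^ r \<ge> (1 - real r * (real r - 1) / 2 / real n) / fact r"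
proof -
  have "fact r * real (n choose r) = (\<Prod>i = 0..<r. real n - real i)"
    by (simp add: binomial_gbinomial gbinomial_mult_fact)
  also have "\<dots> = (\<Prod>i<r. real n * (1 - real i / real n))"
    using assms by (intro prod.cong) (auto simp: atLeast0LessThan field_simps)
  also have "\<dots> = real n ^ r * (\<Prod>i<r. 1 - real i / real n)"
    by (simp add: prod.distrib)
  finally have E: "fact r * real (n choose r) = real n ^ r * (\<Prod>i<r. 1 - real i / real n)" .
  have "(\<Prod>i<r. 1 - real i / real n) \<ge> 1 - (\<Sum>i<r. real i / real n)"
    by (rule weierstrass_prod) (use assms in auto)
  also have "(\<Sum>i<r. real i / real n) = real r * (real r - 1) / 2 / real n"
    by (simp add: sum_divide_distrib[symmetric] sum_lessThan_real)
  finally have "(\<Prod>i<r. 1 - real i / real n) \<ge> 1 - real r * (real r - 1) / 2 / real n" .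
  moreover have "real (n choose r) / real n ^ r = (\<Prod>i<r. 1 - real i / real n) / fact r"
  proof -
    have np: "real n ^ r > 0" using assms by simp
    have fp: "fact r > (0::real)" by simp
    have "real (n choose r) = real n ^ r * (\<Prod>i<r. 1 - real i / real n) / fact r"
      using E fp by (simp add: eq_divide_eq mult.commute)
    then show ?thesis using np by simp
  qed
  ultimately show ?thesis by (simp add: divide_right_mono)
qed

lemma exists_graph:
  fixes n m r :: nat
  assumes r: "r \<ge> 1" and m: "n choose r \<le> m"
  shows "\<exists>G. rgraph r G \<and> card G = m \<and> Ksets {..<n} r \<subseteq> G"
proof -
  define N where "N = r * (m + n + 1)"
  have nN: "n \<le> N"
  proof -
    have "1 * (m + n + 1) \<le> r * (m + n + 1)" using r by (intro mult_le_mono1)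
    then show ?thesis unfolding N_def by simp
  qed
  have "real m \<le> real (m + n + 1)" by simp
  also have "\<dots> \<le> real (m + n + 1) ^ r" using r by (intro self_le_power) auto
  also have "\<dots> = (real N / real r) ^ r"
  proof -
    have "real N = real r * real (m + n + 1)" unfolding N_def by (simp only: of_nat_mult)
    then have "real N / real r = real (m + n + 1)" using r by simp
    then show ?thesis by simp
  qed
  also have "\<dots> \<le> real (N choose r)" by (rule binomial_ge_n_over_k_pow_k) (use r in \<open>simp add: N_def\<close>)
  finally have mN: "m \<le> N choose r" by simp
  have sub: "Ksets {..<n} r \<subseteq> Ksets {..<N} r" unfolding Ksets_def using nN by auto
  have c1: "card (Ksets {..<n} r) \<le> m" using card_Ksets[of "{..<n}" r] m by simp
  have c2: "m \<le> card (Ksets {..<N} r)" using card_Ksets[of "{..<N}" r] mN by simp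
  obtain G where G: "Ksets {..<n} r \<subseteq> G" "G \<subseteq> Ksets {..<N} r" "card G = m"
    using exists_subset_between[OF c1 c2 sub finite_Ksets[of "{..<N}" r]] by blast
  have "rgraph r G" unfolding rgraph_def
  proof (intro conjI ballI)
    show "finite G" by (rule finite_subset[OF G(2) finite_Ksets[of "{..<N}" r]]) simp
  next
    fix e assume "e \<in> G"
    then have "e \<in> Ksets {..<N} r" using G(2) by blast
    then show "finite e" "card e = r" using Ksets_finite_elem[of "{..<N}" e r] unfolding Ksets_def by auto
  qed
  then show ?thesis using G by blast
qed

lemma Lam_bdd: "bdd_above (lagrangian ` {G. rgraph r G \<and> card G = m})"
proof (rule bdd_aboveI[where M=1])
  fix x assume "x \<in> lagrangian ` {G. rgraph r G \<and> card G = m}"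
  then obtain G where "rgraph r G" "x = lagrangian G" by blast
  then show "x \<le> 1" using lag_le1 by blast
qed

lemma Lam_lower:
  fixes n m r :: nat
  assumes r: "r \<ge> 1" and rn: "r \<le> n" and m: "n choose r \<le> m"
  shows "Lam m r \<ge> (1 - real r * (real r - 1) / 2 / real n) / fact r"
proof -
  obtain G where G: "rgraph r G" "card G = m" "Ksets {..<n} r \<subseteq> G" using exists_graph[OF r m] by blast
  have n0: "n > 0" using r rn by simp
  define u where "u x = (if x < n then 1 / real n else 0)" for x
  have u0: "\<And>x. 0 \<le> u x" unfolding u_def by simp
  have uw: "weighting u" by (rule weighting_finite[of "{..<n}"]) (use n0 in \<open>auto simp: u_def\<close>)
  have "wgraph u (Ksets {..<n} r) = real (n choose r) * (1 / real n) ^ r"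
  proof -
    have "wgraph u (Ksets {..<n} r) = (\<Sum>e\<in>Ksets {..<n} r. (1 / real n) ^ r)"
      unfolding wgraph_def
    proof (rule sum.cong[OF refl])
      fix e assume e: "e \<in> Ksets {..<n} r"
      then have "e \<subseteq> {..<n}" "card e = r" unfolding Ksets_def by auto
      then have "(\<Prod>x\<in>e. u x) = (\<Prod>x\<in>e. 1 / real n)" unfolding u_def by (intro prod.cong) auto
      then show "(\<Prod>x\<in>e. u x) = (1 / real n) ^ r" using \<open>card e = r\<close> by simp
    qed
    also have "\<dots> = real (n choose r) * (1 / real n) ^ r" using card_Ksets[of "{..<n}" r] by simp
    finally show ?thesis .
  qed
  also have "\<dots> = real (n choose r) / real n ^ r" by (simp add: power_divide)
  finally have W: "wgraph u (Ksets {..<n} r) = real (n choose r) / real n ^ r" .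
  have "wgraph u (Ksets {..<n} r) \<le> wgraph u G"
    unfolding wgraph_def using G(1) G(3) unfolding rgraph_def
    by (intro sum_mono2) (auto intro: prod_nonneg u0)
  also have "\<dots> \<le> lagrangian G" by (rule lag_ge[OF G(1) uw])
  also have "\<dots> \<le> Lam m r" unfolding Lam_def by (rule cSUP_upper) (use G Lam_bdd in auto)
  finally show ?thesis using W binom_lower[OF rn n0] by linarith
qed

lemma Lam_upper:
  fixes m r :: nat and B :: real
  assumes r: "r \<ge> 1" and H: "\<And>G. rgraph r G \<Longrightarrow> card G = m \<Longrightarrow> lagrangian G \<le> B"
  shows "Lam m r \<le> B"
proof -
  have c0: "(0::nat) choose r = 0" using r by simp
  have cm: "(0::nat) choose r \<le> m" unfolding c0 by simp
  then obtain G where "rgraph r G" "card G = m" using exists_graph[OF r cm] by auto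
  then show ?thesis unfolding Lam_def by (intro cSUP_least) (use H in auto)
qed

lemma binom_upper:
  fixes t r :: nat
  assumes "r \<le> t"
  shows "fact r * real (t choose r) \<le> real t ^ r"
proof -
  have "fact r * real (t choose r) = (\<Prod>i = 0..<r. real t - real i)"
    by (simp add: binomial_gbinomial gbinomial_mult_fact)
  also have "\<dots> \<le> (\<Prod>i = 0..<r. real t)"
    by (rule prod_mono) (use assms in auto)
  also have "\<dots> = real t ^ r" by simp
  finally show ?thesis .
qed

lemma mprime_bound:
  fixes r t m :: nat and E :: real
  assumes r: "r \<ge> 1" and rt: "r \<le> t" and E0: "E \<ge> 0" and Et: "E \<le> real t"
    and m: "m \<le> t choose r"
  shows "fact r * real (nat \<lfloor>real m - real r * E * real t ^ (r - 1)\<rfloor>) \<le> (real t - E)^r"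
proof -
  define a where "a = real m - real r * E * real t ^ (r - 1)"
  have tpos: "real t > 0" using r rt by simp
  have pw: "real t ^ r = real t * real t ^ (r - 1)" using r by (metis Suc_diff_le diff_Suc_1 power_Suc)
  have bern: "(real t - E)^r \<ge> real t ^ r - real r * E * real t ^ (r - 1)"
  proof -
    have "1 + real r * (- (E / real t)) \<le> (1 + - (E / real t))^r"
      by (rule Bernoulli_inequality) (use Et tpos in \<open>simp add: divide_le_eq\<close>)
    then have "real t ^ r * (1 - real r * (E / real t)) \<le> real t ^ r * (1 - E / real t)^r"
      by (intro mult_left_mono) auto
    also have "real t ^ r * (1 - E / real t)^r = (real t - E)^r"
      using tpos by (simp add: power_mult_distrib[symmetric] field_simps)
    also have "real t ^ r * (1 - real r * (E / real t)) = real t ^ r - real r * E * real t ^ (r - 1)"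
      using tpos pw by (simp add: field_simps)
    finally show ?thesis .
  qed
  have tE: "(real t - E)^r \<ge> 0" using Et by simp
  show ?thesis
  proof (cases "a < 0")
    case True
    then have "nat \<lfloor>a\<rfloor> = 0" by simp
    then show ?thesis using tE unfolding a_def by simp
  next
    case False
    have "real (nat \<lfloor>a\<rfloor>) \<le> a" using False by linarith
    then have "fact r * real (nat \<lfloor>a\<rfloor>) \<le> fact r * a" by (rule mult_left_mono) simp
    also have "\<dots> = fact r * real m - fact r * (real r * E * real t ^ (r - 1))" unfolding a_def by (simp add: algebra_simps)
    also have "\<dots> \<le> real t ^ r - real r * E * real t ^ (r - 1)"
    proof -
      have "fact r * real m \<le> fact r * real (t choose r)" using m by simp
      also have "\<dots> \<le> real t ^ r" by (rule binom_upper[OF rt])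
      finally have A: "fact r * real m \<le> real t ^ r" .
      have "real r * E * real t ^ (r - 1) \<ge> 0" using E0 by simp
      then have "fact r * (real r * E * real t ^ (r - 1)) \<ge> 1 * (real r * E * real t ^ (r - 1))"
        by (intro mult_right_mono) (auto simp: fact_ge_1)
      then show ?thesis using A by simp
    qed
    also have "\<dots> \<le> (real t - E)^r" by (rule bern)
    finally show ?thesis unfolding a_def .
  qed
qed

theorem lemma4p5:
  fixes r :: nat
  assumes "r \<ge> 3"
  shows "\<exists>\<alpha>::real>0. \<exists>c::real>0. \<exists>t0::nat. \<forall>t::nat. \<forall>m::nat.
           t \<ge> t0 \<longrightarrow> (t - 1) choose r \<le> m \<longrightarrow> m \<le> t choose r \<longrightarrow>
           Lam m r - Lam (nat \<lfloor>real m - \<alpha> * real t ^ (r - 1)\<rfloor>) r \<ge> c / (real t)^2"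
proof -
  define R where "R = real r * (real r - 1) / 2"
  define E where "E = R + 3 + real r ^ 5"
  have r3: "real r \<ge> 3" using assms by simp
  have R0: "R \<ge> 0" unfolding R_def using r3 by simp
  have p0: "real r ^ 5 \<ge> 0" by simp
  have E0: "E > 0" unfolding E_def using R0 p0 by linarith
  have main: "Lam m r - Lam (nat \<lfloor>real m - real r * E * real t ^ (r - 1)\<rfloor>) r \<ge> (1 / fact r) / (real t)^2"
    if t: "t \<ge> 3 * r ^ 5" and m1: "(t - 1) choose r \<le> m" and m2: "m \<le> t choose r" for t m :: nat
  proof -
    have tr: "real t \<ge> 3 * real r ^ 5" using t by (metis of_nat_le_iff of_nat_mult of_nat_numeral of_nat_power)
    note nf = num_facts[OF r3 tr, folded R_def]
    have Et: "E \<le> real t" using nf(2) unfolding E_def by simp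
    have t1: "real t > 1" using nf(7) .
    have rt1: "r \<le> t - 1"
    proof -
      have "real r \<le> real r ^ 5" using r3 by (intro self_le_power) auto
      then have "real r + 1 \<le> real t" using tr r3 by linarith
      then show ?thesis by linarith
    qed
    have rt: "r \<le> t" using rt1 by simp
    have nt: "real (t - 1) = real t - 1" using t1 by (simp add: of_nat_diff)
    have low: "Lam m r \<ge> (1 - R / (real t - 1)) / fact r"
      using Lam_lower[OF _ rt1 m1] assms nt unfolding R_def by simp
    define m' where "m' = nat \<lfloor>real m - real r * E * real t ^ (r - 1)\<rfloor>"
    have mb: "fact r * real m' \<le> (real t - E)^r"
      unfolding m'_def by (rule mprime_bound) (use assms rt E0 Et m2 in auto)
    have up: "Lam m' r \<le> (1 - R / (real t - 1) - 1 / (real t)^2) / fact r"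
    proof (rule Lam_upper)
      show "1 \<le> r" using assms by simp
      fix G assume G: "rgraph r G" "card G = m'"
      show "lagrangian G \<le> (1 - R / (real t - 1) - 1 / (real t)^2) / fact r"
        unfolding R_def by (rule upper[OF assms tr G(1)]) (use mb G(2) in \<open>simp add: E_def R_def\<close>)
    qed
    have "(1 - R / (real t - 1)) / fact r - (1 - R / (real t - 1) - 1 / (real t)^2) / fact r = (1 / fact r) / (real t)^2"
      by (simp add: field_simps)
    then show ?thesis using low up unfolding m'_def by linarith
  qed
  have A: "\<forall>t::nat. \<forall>m::nat. t \<ge> 3 * r ^ 5 \<longrightarrow> (t - 1) choose r \<le> m \<longrightarrow> m \<le> t choose r \<longrightarrow>
           Lam m r - Lam (nat \<lfloor>real m - (real r * E) * real t ^ (r - 1)\<rfloor>) r \<ge> (1 / fact r) / (real t)^2"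
    using main by blast
  have p1: "real r * E > 0" using E0 r3 by simp
  have p2: "1 / fact r > (0::real)" by simp
  show ?thesis using A p1 p2 by blast
qed

end
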